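(* In the Setting, suppose that $r=\sqrt{K-\lambda_1}$ and $s=-\sqrt{K-\lambda_1}$. Then $c=m$ and \[ v=\frac{(-s)(n^2-1)}{n+s},\quad k=(-s)n,\quad \lambda=\mu=(-s)(n+s). \]
   Context: Setting: $\Gamma$ is a primitive strongly regular graph with parameters $(v,k,\lambda,\mu)$ (a $k$-regular graph on $v$ vertices, any two adjacent vertices having $\lambda$ and any two distinct non-adjacent vertices having $\mu$ common neighbours; primitive means $\Gamma$ and its complement are connected), with spectrum $k^1, r^f, s^g$ where $k>r>s$ and exponents are multiplicities. $C$ is a coclique in $\Gamma$ of size $c=\frac{vs}{s-k}$. A $K$-regular graph on $V$ vertices, neither complete nor edgeless, is a divisible design graph with parameters $(V,K,\lambda_1,\lambda_2;m,n)$ if its vertex set can be partitioned into $m$ canonical classes of size $n$ such that two distinct vertices in the same class have exactly $\lambda_1$ common neighbours and two vertices in different classes have exactly $\lambda_2$ common neighbours; it is proper unless $m=1$, $n=1$ or $\lambda_1=\lambda_2$. It is assumed that the subgraph $\Delta$ induced on $V(\Gamma)\setminus C$ is a proper divisible design graph with parameters $(V,K,\lambda_1,\lambda_2;m,n)$. *)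

theory Defs
  imports Complex_Main "HOL-Library.Disjoint_Sets"
begin

definition sgraph :: "'a set \<Rightarrow> ('a \<Rightarrow> 'a \<Rightarrow> bool) \<Rightarrow> bool" where
  "sgraph V E \<longleftrightarrow> finite V \<and> (\<forall>x y. E x y \<longrightarrow> x \<in> V \<and> y \<in> V)
     \<and> (\<forall>x y. E x y \<longrightarrow> E y x) \<and> (\<forall>x. \<not> E x x)"

definition common_nbrs :: "'a set \<Rightarrow> ('a \<Rightarrow> 'a \<Rightarrow> bool) \<Rightarrow> 'a \<Rightarrow> 'a \<Rightarrow> nat" where
  "common_nbrs V E x y = card {w \<in> V. E x w \<and> E y w}"

definition degree :: "'a set \<Rightarrow> ('a \<Rightarrow> 'a \<Rightarrow> bool) \<Rightarrow> 'a \<Rightarrow> nat" where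
  "degree V E x = card {w \<in> V. E x w}"

definition graph_connected :: "'a set \<Rightarrow> ('a \<Rightarrow> 'a \<Rightarrow> bool) \<Rightarrow> bool" where
  "graph_connected V E \<longleftrightarrow> (\<forall>x\<in>V. \<forall>y\<in>V. E\<^sup>*\<^sup>* x y)"

definition complement_graph :: "'a set \<Rightarrow> ('a \<Rightarrow> 'a \<Rightarrow> bool) \<Rightarrow> 'a \<Rightarrow> 'a \<Rightarrow> bool" where
  "complement_graph V E x y \<longleftrightarrow> x \<in> V \<and> y \<in> V \<and> x \<noteq> y \<and> \<not> E x y"

definition induced :: "'a set \<Rightarrow> ('a \<Rightarrow> 'a \<Rightarrow> bool) \<Rightarrow> 'a \<Rightarrow> 'a \<Rightarrow> bool" where
  "induced W E x y \<longleftrightarrow> x \<in> W \<and> y \<in> W \<and> E x y"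

definition strongly_regular :: "'a set \<Rightarrow> ('a \<Rightarrow> 'a \<Rightarrow> bool) \<Rightarrow> nat \<Rightarrow> nat \<Rightarrow> nat \<Rightarrow> nat \<Rightarrow> bool" where
  "strongly_regular V E v k lam mu \<longleftrightarrow> sgraph V E \<and> card V = v
     \<and> (\<forall>x\<in>V. degree V E x = k)
     \<and> (\<forall>x\<in>V. \<forall>y\<in>V. E x y \<longrightarrow> common_nbrs V E x y = lam)
     \<and> (\<forall>x\<in>V. \<forall>y\<in>V. x \<noteq> y \<and> \<not> E x y \<longrightarrow> common_nbrs V E x y = mu)"

definition primitive :: "'a set \<Rightarrow> ('a \<Rightarrow> 'a \<Rightarrow> bool) \<Rightarrow> bool" where
  "primitive V E \<longleftrightarrow> graph_connected V E \<and> graph_connected V (complement_graph V E)"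

definition adj_eigenvalue :: "'a set \<Rightarrow> ('a \<Rightarrow> 'a \<Rightarrow> bool) \<Rightarrow> real \<Rightarrow> bool" where
  "adj_eigenvalue V E \<theta> \<longleftrightarrow> (\<exists>x :: 'a \<Rightarrow> real. (\<exists>u\<in>V. x u \<noteq> 0) \<and>
      (\<forall>u\<in>V. (\<Sum>w\<in>V. if E u w then x w else 0) = \<theta> * x u))"

definition srg_spectrum :: "'a set \<Rightarrow> ('a \<Rightarrow> 'a \<Rightarrow> bool) \<Rightarrow> nat \<Rightarrow> real \<Rightarrow> real \<Rightarrow> bool" where
  "srg_spectrum V E k r s \<longleftrightarrow> {\<theta>. adj_eigenvalue V E \<theta>} = {real k, r, s} \<and> real k > r \<and> r > s"

definition coclique :: "'a set \<Rightarrow> ('a \<Rightarrow> 'a \<Rightarrow> bool) \<Rightarrow> 'a set \<Rightarrow> bool" where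
  "coclique V E C \<longleftrightarrow> C \<subseteq> V \<and> (\<forall>x\<in>C. \<forall>y\<in>C. \<not> E x y)"

definition divisible_design_graph ::
  "'a set \<Rightarrow> ('a \<Rightarrow> 'a \<Rightarrow> bool) \<Rightarrow> nat \<Rightarrow> nat \<Rightarrow> nat \<Rightarrow> nat \<Rightarrow> nat \<Rightarrow> nat \<Rightarrow> bool" where
  "divisible_design_graph W F nv K l1 l2 m n \<longleftrightarrow> sgraph W F \<and> card W = nv
     \<and> (\<forall>x\<in>W. degree W F x = K)
     \<and> (\<exists>x\<in>W. \<exists>y\<in>W. x \<noteq> y \<and> \<not> F x y)
     \<and> (\<exists>x y. F x y)
     \<and> (\<exists>P. partition_on W P \<and> card P = m \<and> (\<forall>X\<in>P. card X = n)
          \<and> (\<forall>X\<in>P. \<forall>x\<in>X. \<forall>y\<in>X. x \<noteq> y \<longrightarrow> common_nbrs W F x y = l1)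
          \<and> (\<forall>X\<in>P. \<forall>Y\<in>P. X \<noteq> Y \<longrightarrow> (\<forall>x\<in>X. \<forall>y\<in>Y. common_nbrs W F x y = l2)))"

definition proper_ddg ::
  "'a set \<Rightarrow> ('a \<Rightarrow> 'a \<Rightarrow> bool) \<Rightarrow> nat \<Rightarrow> nat \<Rightarrow> nat \<Rightarrow> nat \<Rightarrow> nat \<Rightarrow> nat \<Rightarrow> bool" where
  "proper_ddg W F nv K l1 l2 m n \<longleftrightarrow> divisible_design_graph W F nv K l1 l2 m n
     \<and> m \<noteq> 1 \<and> n \<noteq> 1 \<and> l1 \<noteq> l2"

end

theory Submission
  imports Defs
begin


lemma cardsum: "finite S \<Longrightarrow> real (card {w\<in>S. P w}) = (\<Sum>w\<in>S. if P w then 1 else 0)"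
  by (simp add: sum.If_cases Int_def)

lemma srg_basic:
  assumes "strongly_regular V E v k lam mu"
  shows "finite V" "card V = v" "\<And>x y. E x y \<Longrightarrow> x \<in> V" "\<And>x y. E x y \<Longrightarrow> y \<in> V"
    "\<And>x y. E x y \<Longrightarrow> E y x" "\<And>x. \<not> E x x"
    "\<And>x. x \<in> V \<Longrightarrow> card {w\<in>V. E x w} = k"
  using assms unfolding strongly_regular_def sgraph_def degree_def by blast+

lemma srg_common:
  assumes srg: "strongly_regular V E v k lam mu" and u: "u \<in> V" and y: "y \<in> V"
  shows "real (card {w\<in>V. E u w \<and> E y w}) = real mu + (if y = u then real k - real mu else 0)
           + (if E u y then real lam - real mu else 0)"
proof -
  note b = srg_basic[OF srg]
  show ?thesis
  proof (cases "y = u")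
    case True thus ?thesis using b(6)[of u] b(7)[OF u] by simp
  next
    case False
    then show ?thesis using srg u y unfolding strongly_regular_def common_nbrs_def
      by auto
  qed
qed



lemma srg_eig:
  assumes srg: "strongly_regular V E v k lam mu" and eig: "adj_eigenvalue V E \<theta>"
    and ne: "\<theta> \<noteq> real k"
  shows "\<theta>^2 = (real k - real mu) + (real lam - real mu) * \<theta>"
proof -
  note b = srg_basic[OF srg]
  obtain x u0 where u0: "u0 \<in> V" "x u0 \<noteq> 0" and Ax: "\<And>u. u\<in>V \<Longrightarrow> (\<Sum>w\<in>V. if E u w then x w else 0) = \<theta> * x u"
    using eig unfolding adj_eigenvalue_def by blast
  have "(\<Sum>u\<in>V. \<Sum>w\<in>V. if E u w then x w else 0) = (\<Sum>w\<in>V. \<Sum>u\<in>V. if E u w then x w else 0)"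
    by (rule sum.swap)
  also have "\<dots> = (\<Sum>w\<in>V. x w * real k)"
  proof (rule sum.cong[OF refl])
    fix w assume w: "w \<in> V"
    have "(\<Sum>u\<in>V. if E u w then x w else 0) = (\<Sum>u\<in>V. x w * (if E w u then 1 else 0))"
      by (rule sum.cong) (auto dest: b(5))
    also have "\<dots> = x w * real (card {u\<in>V. E w u})"
      by (simp add: sum_distrib_left[symmetric] cardsum[OF b(1)])
    finally show "(\<Sum>u\<in>V. if E u w then x w else 0) = x w * real k" using b(7)[OF w] by simp
  qed
  finally have "(\<Sum>u\<in>V. \<theta> * x u) = (\<Sum>w\<in>V. x w * real k)"
    using Ax by simp
  hence "\<theta> * (\<Sum>u\<in>V. x u) = real k * (\<Sum>u\<in>V. x u)"
    by (simp add: sum_distrib_left sum_distrib_right mult.commute)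
  hence sum0: "(\<Sum>u\<in>V. x u) = 0" using ne by simp
  have "\<theta>^2 * x u0 = \<theta> * (\<Sum>w\<in>V. if E u0 w then x w else 0)" using Ax[OF u0(1)]
    by (simp add: power2_eq_square)
  also have "\<dots> = (\<Sum>w\<in>V. if E u0 w then \<theta> * x w else 0)"
    unfolding sum_distrib_left by (rule sum.cong) auto
  also have "\<dots> = (\<Sum>w\<in>V. if E u0 w then (\<Sum>y\<in>V. if E w y then x y else 0) else 0)"
    by (rule sum.cong) (auto simp: Ax)
  also have "\<dots> = (\<Sum>w\<in>V. \<Sum>y\<in>V. if E u0 w \<and> E w y then x y else 0)"
    by (rule sum.cong) (auto intro: sum.cong)
  also have "\<dots> = (\<Sum>y\<in>V. \<Sum>w\<in>V. if E u0 w \<and> E w y then x y else 0)"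
    by (rule sum.swap)
  also have "\<dots> = (\<Sum>y\<in>V. x y * real (card {w\<in>V. E u0 w \<and> E y w}))"
  proof (rule sum.cong[OF refl])
    fix y assume y: "y \<in> V"
    have "(\<Sum>w\<in>V. if E u0 w \<and> E w y then x y else 0) = (\<Sum>w\<in>V. x y * (if E u0 w \<and> E y w then 1 else 0))"
      by (rule sum.cong) (auto dest: b(5))
    also have "\<dots> = x y * real (card {w\<in>V. E u0 w \<and> E y w})"
      by (simp add: sum_distrib_left[symmetric] cardsum[OF b(1)])
    finally show "(\<Sum>w\<in>V. if E u0 w \<and> E w y then x y else 0) = x y * real (card {w\<in>V. E u0 w \<and> E y w})" .
  qed
  also have "\<dots> = (\<Sum>y\<in>V. real mu * x y + (if y = u0 then (real k - real mu) * x y else 0)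
        + (if E u0 y then (real lam - real mu) * x y else 0))"
    by (rule sum.cong[OF refl]) (simp add: srg_common[OF srg u0(1)] algebra_simps)
  also have "\<dots> = real mu * (\<Sum>y\<in>V. x y) + (real k - real mu) * x u0
        + (real lam - real mu) * (\<Sum>y\<in>V. if E u0 y then x y else 0)"
  proof -
    have e1: "(\<Sum>y\<in>V. if E u0 y then (real lam - real mu) * x y else 0)
       = (real lam - real mu) * (\<Sum>y\<in>V. if E u0 y then x y else 0)"
      unfolding sum_distrib_left by (rule sum.cong) auto
    show ?thesis using u0(1) b(1) by (simp add: sum.distrib sum_distrib_left e1)
  qed
  also have "\<dots> = ((real k - real mu) + (real lam - real mu) * \<theta>) * x u0"
    using sum0 Ax[OF u0(1)] by (simp add: algebra_simps)
  finally show ?thesis using u0(2) by simp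
qed



lemma swap_card:
  assumes "finite Y" "finite Z"
  shows "(\<Sum>y\<in>Y. real (card {w\<in>Z. R y w})) = (\<Sum>w\<in>Z. real (card {y\<in>Y. R y w}))"
  using assms by (simp add: cardsum sum.swap[of _ Y Z])

lemma card_sq: "real (card S) ^ 2 = real (card (S \<times> S))"
  by (simp add: card_cartesian_product power2_eq_square)



theorem mainTheorem8:
  fixes V :: "'a set" and E :: "'a \<Rightarrow> 'a \<Rightarrow> bool" and C :: "'a set"
    and v k lam mu :: nat and r s :: real
    and nV K l1 l2 m n :: nat
  assumes srg: "strongly_regular V E v k lam mu"
    and prim: "primitive V E"
    and spec: "srg_spectrum V E k r s"
    and cocl: "coclique V E C"
    and csize: "real (card C) = real v * s / (s - real k)"
    and ddg: "proper_ddg (V - C) (induced (V - C) E) nV K l1 l2 m n"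
    and hr: "r = sqrt (real K - real l1)"
    and hs: "s = - sqrt (real K - real l1)"
  shows "real (card C) = real m
    \<and> real v = (- s) * (real n ^ 2 - 1) / (real n + s)
    \<and> real k = (- s) * real n
    \<and> real lam = (- s) * (real n + s)
    \<and> real mu = (- s) * (real n + s)"
proof -
  note b = srg_basic[OF srg]
  define W where "W = V - C"
  define F where "F = induced W E"
  have CV: "C \<subseteq> V" and Cind: "\<And>x y. x \<in> C \<Longrightarrow> y \<in> C \<Longrightarrow> \<not> E x y"
    using cocl unfolding coclique_def by auto
  have finC: "finite C" using CV b(1) finite_subset by blast
  have finW: "finite W" using b(1) W_def by simp
  have WV: "W \<subseteq> V" using W_def by auto
  have dd: "\<And>x. x \<in> W \<Longrightarrow> degree W F x = K" and m1: "m \<noteq> 1" and n1: "n \<noteq> 1" and l12: "l1 \<noteq> l2"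
    and cardW: "card W = nV"
  proof -
    have "proper_ddg W F nV K l1 l2 m n" using ddg W_def F_def by simp
    note D = this[unfolded proper_ddg_def divisible_design_graph_def]
    show "\<And>x. x \<in> W \<Longrightarrow> degree W F x = K" using D by (elim conjE) simp
    show "m \<noteq> 1" using D by (elim conjE) simp
    show "n \<noteq> 1" using D by (elim conjE) simp
    show "l1 \<noteq> l2" using D by (elim conjE) simp
    show "card W = nV" using D by (elim conjE) simp
  qed
  obtain x0 where x0: "x0 \<in> W"
  proof -
    have "proper_ddg W F nV K l1 l2 m n" using ddg W_def F_def by simp
    note D = this[unfolded proper_ddg_def divisible_design_graph_def]
    then have "\<exists>x\<in>W. \<exists>y\<in>W. x \<noteq> y \<and> \<not> F x y" by (elim conjE)
    then show ?thesis using that by blast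
  qed
  obtain P where P: "partition_on W P" "card P = m" "\<And>X. X\<in>P \<Longrightarrow> card X = n"
     "\<And>X x y. X\<in>P \<Longrightarrow> x\<in>X \<Longrightarrow> y\<in>X \<Longrightarrow> x \<noteq> y \<Longrightarrow> common_nbrs W F x y = l1"
     "\<And>X Y x y. X\<in>P \<Longrightarrow> Y\<in>P \<Longrightarrow> X \<noteq> Y \<Longrightarrow> x\<in>X \<Longrightarrow> y\<in>Y \<Longrightarrow> common_nbrs W F x y = l2"
  proof -
    have "divisible_design_graph W F nV K l1 l2 m n"
      using ddg unfolding proper_ddg_def W_def F_def by simp
    then have "\<exists>P. partition_on W P \<and> card P = m \<and> (\<forall>X\<in>P. card X = n)
          \<and> (\<forall>X\<in>P. \<forall>x\<in>X. \<forall>y\<in>X. x \<noteq> y \<longrightarrow> common_nbrs W F x y = l1)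
          \<and> (\<forall>X\<in>P. \<forall>Y\<in>P. X \<noteq> Y \<longrightarrow> (\<forall>x\<in>X. \<forall>y\<in>Y. common_nbrs W F x y = l2))"
      unfolding divisible_design_graph_def by (elim conjE)
    then obtain P where h: "partition_on W P \<and> card P = m \<and> (\<forall>X\<in>P. card X = n)
          \<and> (\<forall>X\<in>P. \<forall>x\<in>X. \<forall>y\<in>X. x \<noteq> y \<longrightarrow> common_nbrs W F x y = l1)
          \<and> (\<forall>X\<in>P. \<forall>Y\<in>P. X \<noteq> Y \<longrightarrow> (\<forall>x\<in>X. \<forall>y\<in>Y. common_nbrs W F x y = l2))"
      by (rule exE)
    show ?thesis
      apply (rule that[of P])
      using h apply simp
      using h apply simp
      using h apply simp
      using h apply simp
      using h by simp
  qed
  define a where "a = sqrt (real K - real l1)"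
  have ra: "r = a" and sa: "s = - a" using hr hs a_def by auto
  have eigs: "{\<theta>. adj_eigenvalue V E \<theta>} = {real k, r, s}" and rk: "r < real k" and sr: "s < r"
    using spec unfolding srg_spectrum_def by auto
  have apos: "a > 0" using sr ra sa by simp
  have a2: "a^2 = real K - real l1"
  proof -
    have "real K - real l1 > 0" using apos unfolding a_def by simp
    thus ?thesis unfolding a_def by simp
  qed
  have er: "adj_eigenvalue V E r" and es: "adj_eigenvalue V E s" using eigs by auto
  have q1: "a^2 = (real k - real mu) + (real lam - real mu) * a"
    using srg_eig[OF srg er] rk ra by simp
  have q2: "a^2 = (real k - real mu) - (real lam - real mu) * a"
    using srg_eig[OF srg es] rk sr sa by simp
  have lm: "lam = mu" proof -
    have "(real lam - real mu) * a = 0" using q1 q2 by simp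
    thus ?thesis using apos by simp
  qed
  have ak: "a^2 = real k - real mu" using q1 lm by simp
  have x0V: "x0 \<in> V" using x0 WV by auto
  have sumcn: "(\<Sum>y\<in>V. real (card {w\<in>V. E x0 w \<and> E y w})) = real k * real k"
  proof -
    have "(\<Sum>y\<in>V. real (card {w\<in>V. E x0 w \<and> E y w})) = (\<Sum>w\<in>V. real (card {y\<in>V. E x0 w \<and> E y w}))"
      by (rule swap_card[OF b(1) b(1)])
    also have "\<dots> = (\<Sum>w\<in>V. if E x0 w then real k else 0)"
    proof (rule sum.cong[OF refl])
      fix w assume w: "w \<in> V"
      show "real (card {y\<in>V. E x0 w \<and> E y w}) = (if E x0 w then real k else 0)"
      proof (cases "E x0 w")
        case True
        have "{y\<in>V. E x0 w \<and> E y w} = {y\<in>V. E w y}" using True b(5) by blast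
        thus ?thesis using True b(7)[OF w] by simp
      qed simp
    qed
    also have "\<dots> = real k * real (card {w\<in>V. E x0 w})"
      by (simp add: cardsum[OF b(1)] sum_distrib_left if_distrib cong: if_cong)
    finally show ?thesis using b(7)[OF x0V] by simp
  qed
  have ident: "real k * real k = real mu * real v + (real k - real mu)"
  proof -
    have "(\<Sum>y\<in>V. real (card {w\<in>V. E x0 w \<and> E y w})) = (\<Sum>y\<in>V. real mu + (if y = x0 then real k - real mu else 0))"
      by (rule sum.cong[OF refl]) (simp add: srg_common[OF srg x0V] lm)
    also have "\<dots> = real mu * real v + (real k - real mu)"
      using x0V b(1) b(2) by (simp add: sum.distrib)
    finally show ?thesis using sumcn by simp
  qed
  define cc where "cc = real (card C)"
  define NN where "NN = real (card W)"
  define d where "d x = real (card {z\<in>C. E x z})" for x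
  have NNv: "NN = real v - cc"
  proof -
    have "card C \<le> v" using CV b(1) b(2) card_mono by blast
    thus ?thesis using CV b(1) b(2) unfolding NN_def cc_def W_def
      by (simp add: card_Diff_subset finite_subset of_nat_diff)
  qed
  have Cnb: "{x\<in>W. E x z} = {x\<in>V. E z x}" if z: "z \<in> C" for z
    using z Cind b(3,4,5) unfolding W_def by blast
  have sumd: "(\<Sum>x\<in>W. d x) = cc * real k"
  proof -
    have "(\<Sum>x\<in>W. d x) = (\<Sum>z\<in>C. real (card {x\<in>W. E x z}))"
      unfolding d_def by (rule swap_card[OF finW finC])
    also have "\<dots> = (\<Sum>z\<in>C. real k)"
      by (rule sum.cong[OF refl]) (use CV b(7) Cnb in auto)
    finally show ?thesis unfolding cc_def by simp
  qed
  have cz: "real (card {y\<in>W. E y z \<and> E y z'}) = real mu + (if z = z' then real k - real mu else 0)"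
    if z: "z \<in> C" and z': "z' \<in> C" for z z'
  proof -
    have "{y\<in>W. E y z \<and> E y z'} = {w\<in>V. E z w \<and> E z' w}"
      using z z' Cind b(3,4,5) unfolding W_def by blast
    moreover have "z \<in> V" "z' \<in> V" using z z' CV by auto
    ultimately show ?thesis using srg_common[OF srg, of z z'] z z' Cind by auto
  qed
  have sumd2: "(\<Sum>x\<in>W. d x ^ 2) = cc * (real mu * cc + real k - real mu)"
  proof -
    have "(\<Sum>x\<in>W. d x ^ 2) = (\<Sum>x\<in>W. real (card {p\<in>C \<times> C. E x (fst p) \<and> E x (snd p)}))"
    proof (rule sum.cong[OF refl])
      fix x
      have "{p\<in>C \<times> C. E x (fst p) \<and> E x (snd p)} = {z\<in>C. E x z} \<times> {z\<in>C. E x z}" by auto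
      thus "d x ^ 2 = real (card {p\<in>C \<times> C. E x (fst p) \<and> E x (snd p)})"
        unfolding d_def by (simp add: card_sq)
    qed
    also have "\<dots> = (\<Sum>p\<in>C \<times> C. real (card {x\<in>W. E x (fst p) \<and> E x (snd p)}))"
      by (rule swap_card) (use finW finC in auto)
    also have "\<dots> = (\<Sum>p\<in>C \<times> C. real mu + (if fst p = snd p then real k - real mu else 0))"
    proof (rule sum.cong[OF refl])
      fix p assume "p \<in> C \<times> C"
      thus "real (card {x\<in>W. E x (fst p) \<and> E x (snd p)}) = real mu + (if fst p = snd p then real k - real mu else 0)"
        using cz[of "fst p" "snd p"] by (simp add: mem_Times_iff)
    qed
    also have "\<dots> = (\<Sum>z\<in>C. \<Sum>z'\<in>C. real mu + (if z = z' then real k - real mu else 0))"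
      by (simp add: sum.cartesian_product case_prod_beta)
    also have "\<dots> = (\<Sum>z\<in>C. real mu * cc + (real k - real mu))"
      by (rule sum.cong[OF refl]) (simp add: sum.distrib finC cc_def)
    finally show ?thesis by (simp add: cc_def algebra_simps)
  qed
  have mueq: "real mu = real k - a^2" using ak by simp
  have kpos: "real k > 0" using rk ra apos by simp
  have ca: "cc * (a + real k) = real v * a"
  proof -
    have "s - real k \<noteq> 0" using sa apos kpos by simp
    hence "cc * (s - real k) = real v * s" using csize unfolding cc_def by (simp add: field_simps)
    thus ?thesis using sa by (simp add: algebra_simps)
  qed
  have cmu: "cc * real mu = a * (real k - a)"
  proof -
    have "cc * real mu * (a + real k) = real mu * (cc * (a + real k))" by (simp add: algebra_simps)
    also have "\<dots> = a * (real mu * real v)" using ca by (simp add: algebra_simps)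
    also have "\<dots> = a * (real k * real k - real k + real mu)" using ident by simp
    also have "\<dots> = a * (real k - a) * (a + real k)" unfolding mueq by (simp add: algebra_simps power2_eq_square)
    finally show ?thesis using apos kpos by simp
  qed
  have Na: "NN * a = cc * real k"
  proof -
    show ?thesis using ca unfolding NNv by (smt (verit) ring_distribs)
  qed
  have var0: "(\<Sum>x\<in>W. (d x - a)^2) = 0"
  proof -
    have "(\<Sum>x\<in>W. (d x - a)^2) = (\<Sum>x\<in>W. d x ^ 2) - 2 * a * (\<Sum>x\<in>W. d x) + a^2 * NN"
    proof -
      have "(\<Sum>x\<in>W. (d x - a)^2) = (\<Sum>x\<in>W. d x ^2 - (2*a) * d x + a^2)"
        by (rule sum.cong[OF refl]) (simp add: power2_diff algebra_simps)
      also have "\<dots> = (\<Sum>x\<in>W. d x ^2) - (\<Sum>x\<in>W. (2*a) * d x) + a^2 * NN"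
        unfolding NN_def by (simp add: sum.distrib sum_subtractf)
      finally show ?thesis by (simp add: sum_distrib_left)
    qed
    also have "\<dots> = cc * (real mu * cc + real k - real mu) - 2 * a * (cc * real k) + a * (cc * real k)"
    proof -
      have Na2: "a^2 * NN = a * (cc * real k)" using Na by (simp add: power2_eq_square mult.commute mult.left_commute)
      show ?thesis unfolding sumd sumd2 Na2 by simp
    qed
    also have "\<dots> = cc * (cc * real mu) + cc * (real k - real mu - a * real k)"
      by (simp add: algebra_simps)
    also have "\<dots> = cc * (a * (real k - a) + real k - real mu - a * real k)"
      unfolding cmu[symmetric] by (simp add: algebra_simps)
    also have "\<dots> = 0" unfolding mueq by (simp add: algebra_simps power2_eq_square)
    finally show ?thesis .
  qed
  have da: "d x = a" if "x \<in> W" for x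
  proof -
    have "\<forall>x\<in>W. (d x - a)^2 = 0" using var0 finW by (simp add: sum_nonneg_eq_0_iff)
    thus ?thesis using that by simp
  qed
  have splitV: "real (card {w\<in>V. Q w}) = real (card {w\<in>W. Q w}) + real (card {w\<in>C. Q w})" for Q
  proof -
    have "{w\<in>V. Q w} = {w\<in>W. Q w} \<union> {w\<in>C. Q w}" using CV unfolding W_def by blast
    moreover have "{w\<in>W. Q w} \<inter> {w\<in>C. Q w} = {}" unfolding W_def by blast
    ultimately show ?thesis using finW finC by (simp add: card_Un_disjoint)
  qed
  have KK: "real K = real k - a"
  proof -
    have "degree W F x0 = card {w\<in>W. E x0 w}"
      unfolding degree_def F_def induced_def using x0 by meson
    hence "real K = real (card {w\<in>W. E x0 w})" using dd[OF x0] by simp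
    also have "\<dots> = real k - d x0" using splitV[of "E x0"] b(7)[OF x0V] unfolding d_def by simp
    finally show ?thesis using da[OF x0] by simp
  qed
  have l1eq: "real l1 = real mu - a" using a2 KK mueq by simp
  define t where "t x y = real (card {z\<in>C. E x z \<and> E y z})" for x y
  have cD: "real (common_nbrs W F x y) = real mu - t x y" if x: "x \<in> W" and y: "y \<in> W" and xy: "x \<noteq> y" for x y
  proof -
    have "common_nbrs W F x y = card {w\<in>W. E x w \<and> E y w}"
      unfolding common_nbrs_def F_def induced_def using x y by meson
    moreover have "real (card {w\<in>V. E x w \<and> E y w}) = real mu"
    proof -
      have "x \<in> V" "y \<in> V" using x y WV by auto
      thus ?thesis using srg_common[OF srg, of x y] xy lm by simp
    qed
    ultimately show ?thesis using splitV[of "\<lambda>w. E x w \<and> E y w"] unfolding t_def by simp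
  qed
  define tp where "tp = real mu - real l2"
  have finP: "finite P" using finite_elements[OF finW P(1)] .
  obtain X0 where X0: "X0 \<in> P" "x0 \<in> X0" using P(1) x0 unfolding partition_on_def by blast
  have X0W: "X0 \<subseteq> W" using X0 P(1) unfolding partition_on_def by blast
  have tX0: "t x0 y = a" if y: "y \<in> X0" for y
  proof (cases "y = x0")
    case True thus ?thesis using da[OF x0] unfolding t_def d_def by simp
  next
    case False
    have "common_nbrs W F x0 y = l1" using P(4)[OF X0(1) X0(2) y] False by simp
    thus ?thesis using cD[OF x0 _ ] y X0W False l1eq by (smt (verit) subsetD)
  qed
  have tnX0: "t x0 y = tp" if y: "y \<in> W - X0" for y
  proof -
    obtain Y where Y: "Y \<in> P" "y \<in> Y" using P(1) y unfolding partition_on_def by blast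
    have "Y \<noteq> X0" using Y y by blast
    hence "common_nbrs W F x0 y = l2" using P(5)[OF X0(1) Y(1) _ X0(2) Y(2)] by simp
    moreover have "x0 \<noteq> y" using X0 y by blast
    ultimately show ?thesis using cD[OF x0, of y] y unfolding tp_def by simp
  qed
  have cardX0: "card X0 = n" using P(3) X0 by simp
  have NNmn: "NN = real m * real n"
  proof -
    have "card W = card (\<Union>P)" using P(1) unfolding partition_on_def by simp
    also have "\<dots> = sum card P"
      by (rule card_Union_disjoint) (use P(1) finW in \<open>auto simp: partition_on_def intro: finite_subset\<close>)
    also have "\<dots> = m * n" using P(2) P(3) by simp
    finally show ?thesis unfolding NN_def by simp
  qed
  define S where "S = {z\<in>C. E x0 z}"
  have finS: "finite S" using finC unfolding S_def by simp
  have cardS: "real (card S) = a" using da[OF x0] unfolding S_def d_def by simp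
  have SC: "S \<subseteq> C" unfolding S_def by auto
  have st1: "(\<Sum>y\<in>W. t x0 y) = a * real k"
  proof -
    have "(\<Sum>y\<in>W. t x0 y) = (\<Sum>z\<in>C. real (card {y\<in>W. E x0 z \<and> E y z}))"
      unfolding t_def by (rule swap_card[OF finW finC])
    also have "\<dots> = (\<Sum>z\<in>C. if E x0 z then real k else 0)"
    proof (rule sum.cong[OF refl])
      fix z assume z: "z \<in> C"
      show "real (card {y\<in>W. E x0 z \<and> E y z}) = (if E x0 z then real k else 0)"
      proof (cases "E x0 z")
        case True
        hence "{y\<in>W. E x0 z \<and> E y z} = {x\<in>V. E z x}" using Cnb[OF z] by simp
        thus ?thesis using True b(7) z CV by auto
      qed simp
    qed
    also have "\<dots> = real k * d x0"
      unfolding d_def by (simp add: cardsum[OF finC] sum_distrib_left if_distrib cong: if_cong)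
    finally show ?thesis using da[OF x0] by simp
  qed
  have st2: "(\<Sum>y\<in>W. t x0 y ^ 2) = a * (real mu * a + real k - real mu)"
  proof -
    have "(\<Sum>y\<in>W. t x0 y ^ 2) = (\<Sum>y\<in>W. real (card {p\<in>S \<times> S. E y (fst p) \<and> E y (snd p)}))"
    proof (rule sum.cong[OF refl])
      fix y
      have "{p\<in>S \<times> S. E y (fst p) \<and> E y (snd p)} = {z\<in>C. E x0 z \<and> E y z} \<times> {z\<in>C. E x0 z \<and> E y z}"
        unfolding S_def by auto
      thus "t x0 y ^ 2 = real (card {p\<in>S \<times> S. E y (fst p) \<and> E y (snd p)})"
        unfolding t_def by (simp add: card_sq)
    qed
    also have "\<dots> = (\<Sum>p\<in>S \<times> S. real (card {y\<in>W. E y (fst p) \<and> E y (snd p)}))"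
      by (rule swap_card) (use finW finS in auto)
    also have "\<dots> = (\<Sum>p\<in>S \<times> S. real mu + (if fst p = snd p then real k - real mu else 0))"
    proof (rule sum.cong[OF refl])
      fix p assume "p \<in> S \<times> S"
      hence "fst p \<in> C" "snd p \<in> C" using SC by (auto simp: mem_Times_iff)
      thus "real (card {y\<in>W. E y (fst p) \<and> E y (snd p)}) = real mu + (if fst p = snd p then real k - real mu else 0)"
        using cz[of "fst p" "snd p"] by simp
    qed
    also have "\<dots> = (\<Sum>z\<in>S. \<Sum>z'\<in>S. real mu + (if z = z' then real k - real mu else 0))"
      by (simp add: sum.cartesian_product case_prod_beta)
    also have "\<dots> = (\<Sum>z\<in>S. real mu * a + (real k - real mu))"
      by (rule sum.cong[OF refl]) (simp add: sum.distrib finS cardS)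
    finally show ?thesis using cardS by (simp add: algebra_simps)
  qed
  have splitW: "(\<Sum>y\<in>W. f y) = (\<Sum>y\<in>W - X0. f y) + (\<Sum>y\<in>X0. f y)" for f :: "'a \<Rightarrow> real"
    by (rule sum.subset_diff[OF X0W finW])
  have cWX: "real (card (W - X0)) = NN - real n"
  proof -
    have "card X0 \<le> card W" using X0W finW card_mono by blast
    thus ?thesis using X0W finW cardX0 unfolding NN_def by (simp add: card_Diff_subset finite_subset of_nat_diff)
  qed
  have e1: "real n * a + (NN - real n) * tp = a * real k"
  proof -
    have "(\<Sum>y\<in>W. t x0 y) = (\<Sum>y\<in>W - X0. tp) + (\<Sum>y\<in>X0. a)"
      unfolding splitW using tX0 tnX0 by simp
    thus ?thesis using st1 cWX cardX0 by (simp add: algebra_simps)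
  qed
  have e2: "real n * a^2 + (NN - real n) * tp^2 = a * (real mu * a + real k - real mu)"
  proof -
    have "(\<Sum>y\<in>W. t x0 y ^ 2) = (\<Sum>y\<in>W - X0. tp^2) + (\<Sum>y\<in>X0. a^2)"
      unfolding splitW using tX0 tnX0 by simp
    thus ?thesis using st2 cWX cardX0 by (simp add: algebra_simps)
  qed
  have tpa: "tp \<noteq> a" using l12 l1eq unfolding tp_def by simp
  have n1': "n \<ge> 1"
  proof -
    have "finite X0" using X0W finW finite_subset by blast
    hence "card X0 \<ge> 1" using X0(2) by (metis One_nat_def Suc_leI card_gt_0_iff empty_iff)
    thus ?thesis using cardX0 by simp
  qed
  have m2: "m \<ge> 2"
  proof -
    have "card P \<ge> 1" using finP X0(1) by (metis One_nat_def Suc_leI card_gt_0_iff empty_iff)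
    thus ?thesis using P(2) m1 by simp
  qed
  define PP where "PP = NN - real n"
  have PPpos: "PP > 0"
  proof -
    have "PP = (real m - 1) * real n" unfolding PP_def NNmn by (simp add: algebra_simps)
    moreover have "real m - 1 > 0" using m2 by simp
    moreover have "real n > 0" using n1' by simp
    ultimately show ?thesis by simp
  qed
  have f1: "PP * tp = a * (real k - real n)" using e1 unfolding PP_def by (simp add: algebra_simps)
  have f2: "PP * tp^2 = a * (real mu * a + real k - real mu) - real n * a^2" using e2 unfolding PP_def by (simp add: algebra_simps)
  have key: "PP * (a * (real mu * a + real k - real mu) - real n * a^2) = (a * (real k - real n))^2"
  proof -
    have "PP * (PP * tp^2) = (PP * tp)^2" by (simp add: power2_eq_square)
    thus ?thesis using f1 f2 by simp
  qed
  have anot1: "a \<noteq> 1"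
  proof
    assume a1: "a = 1"
    have "PP * tp = PP * tp^2" using f1 f2 a1 by simp
    hence "PP * tp * (tp - 1) = 0" by (simp add: algebra_simps power2_eq_square)
    hence "tp = 0" using PPpos tpa a1 by simp
    hence nk: "real n = real k" using f1 a1 by simp
    have mu1: "real mu = real k - 1" using mueq a1 by simp
    have "(real k - 1) * (real v - real k - 1) = 0" using ident mu1 by (simp add: algebra_simps)
    moreover have "real k \<noteq> 1" using nk n1 by simp
    ultimately have vk: "real v = real k + 1" by simp
    have "cc * (1 + real k) = 1 * (1 + real k)" using ca a1 vk by (simp add: algebra_simps)
    hence "cc = 1" using kpos by (simp only: mult_right_cancel)
    hence "NN = real n" using Na a1 nk by simp
    hence "real m * real n = real n" using NNmn by simp
    hence "real m = 1" using n1' by simp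
    thus False using m1 by simp
  qed
  have muNN: "real mu * NN = real k * (real k - a)"
  proof -
    have "a * (real mu * NN) = a * (real k * (real k - a))"
      using Na cmu by (smt (verit) mult.commute mult.left_commute)
    thus ?thesis using apos by simp
  qed
  have key2: "(real k * (real k - a) - real mu * real n) * (real mu * a + real k - real mu - real n * a)
       = real mu * a * (real k - real n)^2"
  proof -
    have Q: "real mu * PP = real k * (real k - a) - real mu * real n" unfolding PP_def using muNN by (simp add: algebra_simps)
    have "real mu * (PP * (a * (real mu * a + real k - real mu) - real n * a^2))
       = (real mu * PP) * (a * (real mu * a + real k - real mu - real n * a))"
      by (simp add: algebra_simps power2_eq_square)
    hence "a * ((real k * (real k - a) - real mu * real n) * (real mu * a + real k - real mu - real n * a))
       = real mu * (PP * (a * (real mu * a + real k - real mu) - real n * a^2))"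
      unfolding Q by (simp add: algebra_simps)
    also have "\<dots> = real mu * (a * (real k - real n))^2" by (simp only: key)
    also have "\<dots> = a * (real mu * a * (real k - real n)^2)" by (simp add: algebra_simps power2_eq_square)
    finally show ?thesis using apos by simp
  qed
  have poly: "(real k * (real k - a) - real mu * real n) * (real mu * a + real k - real mu - real n * a)
       - real mu * a * (real k - real n)^2 = a^3 * (a - 1) * (real k - a * real n)"
    unfolding mueq by (simp add: algebra_simps power2_eq_square power3_eq_cube)
  have kan: "real k = a * real n"
  proof -
    have "a^3 * (a - 1) * (real k - a * real n) = 0" using poly key2 by simp
    thus ?thesis using apos anot1 by simp
  qed
  have mu_an: "real mu = a * (real n - a)" using mueq kan by (simp add: algebra_simps power2_eq_square)
  have na: "real n - a \<noteq> 0"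
  proof
    assume "real n - a = 0"
    hence "real n = a" by simp
    hence "a * (real k - a) = 0" using cmu mu_an by simp
    hence "real k = a" using apos by simp
    hence "a = a * a" using kan \<open>real n = a\<close> by simp
    thus False using apos anot1 by simp
  qed
  have cc_eq: "cc * (real n - a) = a * (real n - 1)"
  proof -
    have "a * (cc * (real n - a)) = a * (a * (real n - 1))"
      using cmu mu_an kan by (simp add: algebra_simps)
    thus ?thesis using apos by simp
  qed
  have NNc: "NN = cc * real n"
  proof -
    have "a * NN = a * (cc * real n)" using Na kan by (simp add: algebra_simps)
    thus ?thesis using apos by simp
  qed
  have mc: "cc = real m" using NNc NNmn n1' by simp
  have vv: "real v = a * (real n ^ 2 - 1) / (real n - a)"
  proof -
    have "real v = cc * (real n + 1)" using NNv NNc by (simp add: algebra_simps)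
    hence "real v * (real n - a) = (real n + 1) * (cc * (real n - a))" by (simp add: algebra_simps)
    also have "\<dots> = (real n + 1) * (a * (real n - 1))" unfolding cc_eq ..
    also have "\<dots> = a * (real n ^ 2 - 1)" by (simp add: algebra_simps power2_eq_square)
    finally have "real v * (real n - a) = a * (real n ^ 2 - 1)" .
    thus ?thesis using na by (simp add: field_simps)
  qed
  show ?thesis
    using mc vv kan mu_an lm sa unfolding cc_def by simp
qed

end
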